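(* Let $V$ be a vertex algebra over a field $\mathbb{F}$ of characteristic $p$, and let $(W,Y_W)$ be a $V$-module. Write $Y_W(a,x)=\sum_{n\in\mathbb{Z}}a_nx^{-n-1}$. Let $a\in V$ be such that on $W$ the operators $a_n$ ($n\in\mathbb{N}$) mutually commute and the operators $a_{-n}$ ($n\in\mathbb{Z}_+$) mutually commute. Then for every $n\in\mathbb{Z}_+$, $$Y_W\big((a_{-n})^p\mathbf 1,x\big)=\sum_{j\ge0}\binom{n+j-1}{j}a_{-n-j}^p\,x^{jp}+\sum_{j\ge0}(-1)^{1-n}\binom{n+j-1}{j}a_j^p\,x^{-p(n+j)}.$$ Here $(a_{-n})^p\mathbf 1\in V$ is computed with the vertex operators of $V$, and the right-hand side uses the operators on $W$. In particular, $$Y_W\big((a_{-1})^p\mathbf 1,x\big)=\sum_{j\in\mathbb{Z}}a_j^p\,x^{-p(j+1)}.$$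
   Context: Let $p$ be a prime and $\mathbb{F}$ a field of characteristic $p$. Integers, and binomial coefficients $\binom{n}{k}=\frac{n(n-1)\cdots(n-k+1)}{k!}$ for $n\in\mathbb{Z}$, $k\in\mathbb{N}$, are viewed as elements of the prime subfield of $\mathbb{F}$. We write $\mathbb{Z}_+$ for the positive integers. <b>Formal calculus.</b> For every $n\in\mathbb{Z}$ set $(x+y)^n=\sum_{k\ge0}\binom{n}{k}x^{n-k}y^k$, and let $\delta(x)=\sum_{n\in\mathbb{Z}}x^n$. <b>Vertex algebras.</b> A vertex algebra over $\mathbb{F}$ is a vector space $V$ with a vector $\mathbf 1$ and a linear map $$Y(\cdot,x):V\to(\mathrm{End}\,V)[[x,x^{-1}]],\qquad v\mapsto Y(v,x)=\sum_{n\in\mathbb{Z}}v_nx^{-n-1},$$ satisfying the following conditions for all $u,v\in V$: <ul> <li>$u_nv=0$ for $n\gg0$;</li> <li>$Y(\mathbf 1,x)=\mathrm{id}_V$;</li> <li>$Y(v,x)\mathbf 1\in V[[x]]$ and its constant term is $v$;</li> <li>the Jacobi identity $$x_0^{-1}\delta\!\left(\tfrac{x_1-x_2}{x_0}\right)Y(u,x_1)Y(v,x_2)-x_0^{-1}\delta\!\left(\tfrac{x_2-x_1}{-x_0}\right)Y(v,x_2)Y(u,x_1)=x_2^{-1}\delta\!\left(\tfrac{x_1-x_0}{x_2}\right)Y(Y(u,x_0)v,x_2).$$</li> </ul> A $V$-module is a vector space $W$ with a linear map $Y_W(\cdot,x):V\to(\mathrm{End}\,W)[[x,x^{-1}]]$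 satisfying truncation ($u_nw=0$ for $n\gg0$), $Y_W(\mathbf 1,x)=\mathrm{id}_W$, and the same Jacobi identity with $Y_W$ in place of $Y$ in the three products of vertex operators. *)

theory Defs
  imports Complex_Main "HOL-Computational_Algebra.Primes"
begin

text \<open>Binomial coefficient with integer upper argument, viewed as an integer:
  binom n k = n(n-1)...(n-k+1)/k!  (exact division).  It is mapped into a field via of_int.\<close>
definition ibinom :: "int \<Rightarrow> nat \<Rightarrow> int" where
  "ibinom n k = (\<Prod>i<k. n - int i) div fact k"

definition fin_sum :: "(nat \<Rightarrow> 'a::comm_monoid_add) \<Rightarrow> 'a" where
  "fin_sum f = (\<Sum>i | f i \<noteq> 0. f i)"

text \<open>Coefficient of x^m in the formal series  sum_j c_j x^(e j).\<close>
definition series_coeff :: "('i \<Rightarrow> int) \<Rightarrow> ('i \<Rightarrow> 'a::comm_monoid_add) \<Rightarrow> int \<Rightarrow> 'a" where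
  "series_coeff e c m = (\<Sum>j | e j = m. c j)"

text \<open>Vertex algebra over a field 'f, given in components: Y u n v = u_n v,
  so Y(u,x) = sum_n u_n x^(-n-1).  The Jacobi identity is stated through its
  coefficient of x0^(-l-1) x1^(-m-1) x2^(-n-1) (applied to a vector w); every
  occurring sum over i is finite by the truncation condition.\<close>
locale vertex_algebra =
  fixes smul :: "'f::field \<Rightarrow> 'v::ab_group_add \<Rightarrow> 'v"
    and vac :: 'v
    and Y :: "'v \<Rightarrow> int \<Rightarrow> 'v \<Rightarrow> 'v"
  assumes vs: "vector_space smul"
    and Y_linear_left: "\<And>n v. Vector_Spaces.linear smul smul (\<lambda>u. Y u n v)"
    and Y_linear_right: "\<And>u n. Vector_Spaces.linear smul smul (Y u n)"
    and truncation: "\<And>u v. \<exists>N. \<forall>n\<ge>N. Y u n v = 0"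
    and vacuum: "\<And>n v. Y vac n v = (if n = -1 then v else 0)"
    and creation: "\<And>v n. n \<ge> 0 \<Longrightarrow> Y v n vac = 0"
    and creation_const: "\<And>v. Y v (-1) vac = v"
    and jacobi: "\<And>u v w l m n.
      fin_sum (\<lambda>i. smul ((-1)^i * of_int (ibinom l i))
          (Y u (l + m - int i) (Y v (n + int i) w)
           - smul ((-1) powi l) (Y v (l + n - int i) (Y u (m + int i) w))))
      = fin_sum (\<lambda>i. smul ((-1)^i * of_int (ibinom (int i - m - 1) i))
          (Y (Y u (l + int i) v) (m + n - int i) w))"

locale va_module = vertex_algebra smul vac Y
  for smul :: "'f::field \<Rightarrow> 'v::ab_group_add \<Rightarrow> 'v" and vac Y +
  fixes smulW :: "'f \<Rightarrow> 'w::ab_group_add \<Rightarrow> 'w"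
    and YW :: "'v \<Rightarrow> int \<Rightarrow> 'w \<Rightarrow> 'w"
  assumes vsW: "vector_space smulW"
    and YW_linear_left: "\<And>n w. Vector_Spaces.linear smul smulW (\<lambda>u. YW u n w)"
    and YW_linear_right: "\<And>u n. Vector_Spaces.linear smulW smulW (YW u n)"
    and truncationW: "\<And>u w. \<exists>N. \<forall>n\<ge>N. YW u n w = 0"
    and vacuumW: "\<And>n w. YW vac n w = (if n = -1 then w else 0)"
    and jacobiW: "\<And>u v w l m n.
      fin_sum (\<lambda>i. smulW ((-1)^i * of_int (ibinom l i))
          (YW u (l + m - int i) (YW v (n + int i) w)
           - smulW ((-1) powi l) (YW v (l + n - int i) (YW u (m + int i) w))))
      = fin_sum (\<lambda>i. smulW ((-1)^i * of_int (ibinom (int i - m - 1) i))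
          (YW (Y u (l + int i) v) (m + n - int i) w))"

end

theory Submission
  imports Defs "HOL-Library.Function_Algebras"
begin


definition nmul :: "nat \<Rightarrow> 'a::ab_group_add \<Rightarrow> 'a" where "nmul k v = (\<Sum>i<k. v)"

lemma nmul_0[simp]: "nmul 0 v = 0" by (simp add: nmul_def)
lemma nmul_Suc: "nmul (Suc k) v = v + nmul k v" by (simp add: nmul_def add.commute)
lemma nmul_1[simp]: "nmul (Suc 0) v = v" by (simp add: nmul_def)
lemma nmul_add: "nmul (a+b) v = nmul a v + nmul b v"
  by (induct a) (simp_all add: nmul_Suc add.assoc)
lemma nmul_mult: "nmul (a*b) v = nmul a (nmul b v)"
  by (induct a) (simp_all add: nmul_Suc nmul_add)
lemma nmul_zero[simp]: "nmul k 0 = 0" by (simp add: nmul_def)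
lemma nmul_plus: "nmul k (u+v) = nmul k u + nmul k v"
  by (simp add: nmul_def sum.distrib)
lemma nmul_sum: "nmul k (sum f A) = (\<Sum>x\<in>A. nmul k (f x))"
  by (simp add: nmul_def sum.swap[of _ A])

locale addop =
  fixes S :: "'a::ab_group_add set" and X :: "'a \<Rightarrow> 'a"
  assumes S0: "0 \<in> S" and Sadd: "\<And>u v. u \<in> S \<Longrightarrow> v \<in> S \<Longrightarrow> u + v \<in> S"
    and XS: "\<And>u. u \<in> S \<Longrightarrow> X u \<in> S"
    and Xadd: "\<And>u v. u \<in> S \<Longrightarrow> v \<in> S \<Longrightarrow> X (u + v) = X u + X v"
begin
lemma X0: "X 0 = 0"
  using Xadd[OF S0 S0] by simp
lemma Ssum: "(\<And>x. x \<in> A \<Longrightarrow> f x \<in> S) \<Longrightarrow> sum f A \<in> S"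
  by (induct A rule: infinite_finite_induct) (auto simp: S0 Sadd)
lemma Snmul: "u \<in> S \<Longrightarrow> nmul k u \<in> S"
  unfolding nmul_def by (rule Ssum) auto
lemma Xsum: "(\<And>x. x \<in> A \<Longrightarrow> f x \<in> S) \<Longrightarrow> X (sum f A) = (\<Sum>x\<in>A. X (f x))"
proof (induct A rule: infinite_finite_induct)
  case (insert x F) then show ?case by (simp add: Xadd Ssum)
qed (auto simp: X0)
lemma Xnmul: "u \<in> S \<Longrightarrow> X (nmul k u) = nmul k (X u)"
  unfolding nmul_def by (subst Xsum) auto
lemma powS: "u \<in> S \<Longrightarrow> (X^^k) u \<in> S"
  by (induct k) (auto simp: XS)
lemma pow_add: "u \<in> S \<Longrightarrow> v \<in> S \<Longrightarrow> (X^^k) (u + v) = (X^^k) u + (X^^k) v"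
  by (induct k) (auto simp: Xadd powS)
end

lemma addop_pow: "addop S X \<Longrightarrow> addop S (X^^k)"
  unfolding addop_def by (auto intro: addop.powS addop.pow_add simp: addop_def)

lemma comm_pow:
  assumes "\<And>u. u \<in> S \<Longrightarrow> X (Y u) = Y (X u)" "\<And>u. u \<in> S \<Longrightarrow> Y u \<in> S" "u \<in> S"
  shows "X ((Y^^k) u) = (Y^^k) (X u)"
proof -
  have YS: "(Y^^j) v \<in> S" if "v \<in> S" for j v using that by (induct j) (auto simp: assms(2))
  show ?thesis using assms(3) by (induct k) (auto simp: assms(1) YS)
qed

lemma binom_ops:
  assumes AX: "addop S X" and AY: "addop S Y"
    and comm: "\<And>u. u \<in> S \<Longrightarrow> X (Y u) = Y (X u)" and g: "g \<in> S"
  shows "((\<lambda>u. X u + Y u)^^s) g = (\<Sum>k\<le>s. nmul (s choose k) ((X^^k) ((Y^^(s-k)) g)))"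
proof (induct s)
  case 0 then show ?case by simp
next
  case (Suc s)
  interpret x: addop S X by fact
  interpret y: addop S Y by fact
  define T where "T k = (X^^k) ((Y^^(s + 1 - k)) g)" for k
  have TS: "(X^^k) ((Y^^j) g) \<in> S" for k j using x.powS y.powS g by blast
  have "((\<lambda>u. X u + Y u)^^Suc s) g = X (\<Sum>k\<le>s. nmul (s choose k) ((X^^k) ((Y^^(s-k)) g)))
      + Y (\<Sum>k\<le>s. nmul (s choose k) ((X^^k) ((Y^^(s-k)) g)))"
    using Suc by simp
  also have "X (\<Sum>k\<le>s. nmul (s choose k) ((X^^k) ((Y^^(s-k)) g))) = (\<Sum>k\<le>s. nmul (s choose k) (T (Suc k)))"
    by (subst x.Xsum) (auto simp: x.Snmul TS x.Xnmul T_def)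
  also have "Y (\<Sum>k\<le>s. nmul (s choose k) ((X^^k) ((Y^^(s-k)) g))) = (\<Sum>k\<le>s. nmul (s choose k) (T k))"
  proof -
    have "Y ((X^^k) ((Y^^(s-k)) g)) = T k" if "k \<le> s" for k
    proof -
      have "Y ((X^^k) ((Y^^(s-k)) g)) = (X^^k) (Y ((Y^^(s-k)) g))"
        by (rule comm_pow[of S Y X]) (auto simp: comm x.XS y.powS g)
      also have "Y ((Y^^(s-k)) g) = (Y^^(s+1-k)) g" using that by (simp add: Suc_diff_le)
      finally show ?thesis by (simp add: T_def)
    qed
    then show ?thesis by (subst y.Xsum) (auto simp: y.Snmul TS y.Xnmul)
  qed
  also have "(\<Sum>k\<le>s. nmul (s choose k) (T (Suc k))) + (\<Sum>k\<le>s. nmul (s choose k) (T k))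
     = (\<Sum>k\<le>Suc s. nmul (Suc s choose k) (T k))"
  proof -
    have "(\<Sum>k\<le>Suc s. nmul (Suc s choose k) (T k)) = nmul 1 (T 0) + (\<Sum>k<Suc s. nmul (Suc s choose Suc k) (T (Suc k)))"
      by (subst sum.atMost_shift) simp
    also have "(\<Sum>k<Suc s. nmul (Suc s choose Suc k) (T (Suc k))) =
       (\<Sum>k\<le>s. nmul (s choose k) (T (Suc k))) + (\<Sum>k\<le>s. nmul (s choose Suc k) (T (Suc k)))"
      by (simp add: nmul_add sum.distrib lessThan_Suc_atMost)
    also have "(\<Sum>k\<le>s. nmul (s choose Suc k) (T (Suc k))) = (\<Sum>k<s. nmul (s choose Suc k) (T (Suc k)))"
      by (simp add: lessThan_Suc_atMost[symmetric] binomial_eq_0)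
    also have "nmul 1 (T 0) + ((\<Sum>k\<le>s. nmul (s choose k) (T (Suc k))) + (\<Sum>k<s. nmul (s choose Suc k) (T (Suc k))))
       = (\<Sum>k\<le>s. nmul (s choose k) (T (Suc k))) + (nmul (s choose 0) (T 0) + (\<Sum>k<s. nmul (s choose Suc k) (T (Suc k))))"
      by (simp add: algebra_simps)
    also have "nmul (s choose 0) (T 0) + (\<Sum>k<s. nmul (s choose Suc k) (T (Suc k))) = (\<Sum>k\<le>s. nmul (s choose k) (T k))"
      by (cases s) (simp_all add: sum.atMost_shift lessThan_Suc_atMost)
    finally show ?thesis by simp
  qed
  finally show ?case by (simp add: T_def)
qed

lemma frob2:
  assumes AX: "addop S X" and AY: "addop S Y"
    and comm: "\<And>u. u \<in> S \<Longrightarrow> X (Y u) = Y (X u)" and g: "g \<in> S"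
    and p: "prime p" and char: "\<And>u. u \<in> S \<Longrightarrow> nmul p u = 0"
  shows "((\<lambda>u. X u + Y u)^^p) g = (X^^p) g + (Y^^p) g"
proof -
  interpret x: addop S X by fact
  interpret y: addop S Y by fact
  have p0: "p > 0" using p prime_gt_0_nat by blast
  have "((\<lambda>u. X u + Y u)^^p) g = (\<Sum>k\<le>p. nmul (p choose k) ((X^^k) ((Y^^(p-k)) g)))"
    by (rule binom_ops[OF AX AY comm g])
  also have "\<dots> = (\<Sum>k\<in>{0,p}. nmul (p choose k) ((X^^k) ((Y^^(p-k)) g)))"
  proof (intro sum.mono_neutral_right ballI)
    fix k assume "k \<in> {..p} - {0, p}"
    then have k: "0 < k" "k < p" by auto
    have "p dvd (p choose k)" by (rule dvd_choose_prime) (use k p in auto)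
    then obtain q where q: "p choose k = p * q" by blast
    have "(X^^k) ((Y^^(p-k)) g) \<in> S" using x.powS y.powS g by blast
    then show "nmul (p choose k) ((X^^k) ((Y^^(p-k)) g)) = 0"
      by (simp add: q mult.commute[of p] nmul_mult char y.Snmul)
  qed auto
  finally show ?thesis using p0 by (simp add: nmul_def add.commute)
qed

lemma frob_sum:
  assumes J: "finite J" and A: "\<And>j. j \<in> J \<Longrightarrow> addop S (X j)"
    and comm: "\<And>i j u. i \<in> J \<Longrightarrow> j \<in> J \<Longrightarrow> u \<in> S \<Longrightarrow> X i (X j u) = X j (X i u)"
    and g: "g \<in> S" and p: "prime p" and char: "\<And>u. u \<in> S \<Longrightarrow> nmul p u = 0"
  shows "((\<lambda>u. \<Sum>j\<in>J. X j u)^^p) g = (\<Sum>j\<in>J. (X j ^^ p) g)"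
  using J A comm
proof (induct J rule: finite_induct)
  case empty
  have p0: "p > 0" using p prime_gt_0_nat by blast
  then show ?case by (cases p) simp_all
next
  case (insert j J)
  interpret x: addop S "X j" using insert by auto
  have AY: "addop S (\<lambda>u. \<Sum>i\<in>J. X i u)"
  proof
    show "u \<in> S \<Longrightarrow> (\<Sum>i\<in>J. X i u) \<in> S" for u
      using insert by (intro x.Ssum) (auto intro: addop.XS)
    show "u \<in> S \<Longrightarrow> v \<in> S \<Longrightarrow> (\<Sum>i\<in>J. X i (u + v)) = (\<Sum>i\<in>J. X i u) + (\<Sum>i\<in>J. X i v)" for u v
    proof -
      assume uv: "u \<in> S" "v \<in> S"
      have "X i (u + v) = X i u + X i v" if "i \<in> J" for i
        using insert(4)[of i] that uv by (simp add: addop.Xadd)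
      then show ?thesis by (simp add: sum.distrib)
    qed
  qed (auto simp: x.S0 x.Sadd)
  have cm: "X j (\<Sum>i\<in>J. X i u) = (\<Sum>i\<in>J. X i (X j u))" if "u \<in> S" for u
    using insert that by (subst x.Xsum) (auto intro: addop.XS)
  have "((\<lambda>u. \<Sum>i\<in>insert j J. X i u)^^p) g = ((\<lambda>u. X j u + (\<Sum>i\<in>J. X i u))^^p) g"
    using insert by simp
  also have "\<dots> = (X j ^^ p) g + ((\<lambda>u. \<Sum>i\<in>J. X i u)^^p) g"
    by (rule frob2[OF _ AY _ g p char]) (use insert cm in auto)
  also have "((\<lambda>u. \<Sum>i\<in>J. X i u)^^p) g = (\<Sum>i\<in>J. (X i ^^ p) g)"
    using insert by auto
  finally show ?case using insert by simp
qed




lemma sum_fun_apply: "(sum f A) x = (\<Sum>i\<in>A. f i x)"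
  by (induct A rule: infinite_finite_induct) auto

lemma nmul_fun_apply: "(nmul k F) x = nmul k (F x)"
  by (simp add: nmul_def sum_fun_apply)

lemma fin_sum_bound:
  assumes "\<And>i. i \<ge> N \<Longrightarrow> f i = 0"
  shows "fin_sum f = (\<Sum>i<N. f i)"
proof -
  have sub: "{i. f i \<noteq> 0} \<subseteq> {..<N}" using assms by (auto simp: not_less[symmetric])
  show ?thesis unfolding fin_sum_def
    by (rule sum.mono_neutral_left) (use sub in auto)
qed

lemma ibinom_gchoose: "ibinom x k = (if 0 \<le> x then int (nat x choose k) else (-1)^k * int (k + nat (-x) - 1 choose k))"
  using gbinomial_int_binomial[of x k] gbinomial_prod_rev[of x k] by (simp add: ibinom_def atLeast0LessThan)

lemma ibinom_neg: "n \<ge> 1 \<Longrightarrow> (-1)^i * ibinom (- int n) i = ibinom (int n + int i - 1) i"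
  by (simp add: ibinom_gchoose nat_diff_distrib' add.commute nat_add_distrib)

lemma ibinom_vac: "ibinom (int i - 0 - 1) i = (if i = 0 then 1 else 0)"
  by (cases i) (simp_all add: ibinom_gchoose)

lemma ibinom_diag: "ibinom (1 + int j - 1) j = 1"
  by (simp add: ibinom_gchoose)

lemma of_nat_frob:
  assumes "prime p" "CHAR('f::field) = p"
  shows "(of_nat k :: 'f) ^ p = of_nat k"
proof (induct k)
  case 0 then show ?case using assms prime_gt_0_nat by auto
next
  case (Suc k)
  have "(of_nat k + 1 :: 'f) ^ p = of_nat k ^ p + 1 ^ p"
    by (rule freshmans_dream) (use assms in auto)
  then show ?case using Suc by (simp add: add.commute)
qed

lemma of_int_frob:
  assumes "prime p" "CHAR('f::field) = p"
  shows "(of_int z :: 'f) ^ p = of_int z"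
proof (cases "z \<ge> 0")
  case True
  then have "z = int (nat z)" by simp
  then show ?thesis using of_nat_frob[OF assms, of "nat z"] by (metis of_int_of_nat_eq)
next
  case False
  then have "z = - int (nat (-z))" by simp
  then have e: "(of_int z :: 'f) = - of_nat (nat (-z))" by (metis of_int_minus of_int_of_nat_eq)
  show ?thesis unfolding e
    using minus_power_prime_CHAR[of p "of_nat (nat (-z)) :: 'f"] of_nat_frob[OF assms] assms by simp
qed

lemma minus_one_powi_frob:
  assumes "prime p" "CHAR('f::field) = p"
  shows "((-1::'f) powi k) ^ p = (-1) powi k"
proof -
  have "(-1::'f) powi k = of_int ((-1) ^ nat \<bar>k\<bar>)"
    by (auto simp: power_int_def power_int_minus field_simps)
  then show ?thesis using of_int_frob[OF assms] by metis
qed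




locale L5 = va_module smul vac Y smulW YW
  for smul :: "'f::field \<Rightarrow> 'v::ab_group_add \<Rightarrow> 'v" and vac :: 'v and Y :: "'v \<Rightarrow> int \<Rightarrow> 'v \<Rightarrow> 'v"
    and smulW :: "'f \<Rightarrow> 'w::ab_group_add \<Rightarrow> 'w" and YW :: "'v \<Rightarrow> int \<Rightarrow> 'w \<Rightarrow> 'w" +
  fixes p :: nat and a :: 'v
  assumes prime: "prime p" and char: "CHAR('f) = p"
    and comm_pos: "\<And>i j. i \<ge> 0 \<Longrightarrow> j \<ge> 0 \<Longrightarrow> YW a i \<circ> YW a j = YW a j \<circ> YW a i"
    and comm_neg: "\<And>i j. i < 0 \<Longrightarrow> j < 0 \<Longrightarrow> YW a i \<circ> YW a j = YW a j \<circ> YW a i"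
begin

lemma sW: "smulW c (x + y) = smulW c x + smulW c y" "smulW (c + d) x = smulW c x + smulW d x"
   "smulW c (smulW d x) = smulW (c * d) x" "smulW 1 x = x"
  using vsW unfolding vector_space_def by auto

lemma sW0[simp]: "smulW 0 x = 0" "smulW c 0 = 0"
  using sW(2)[of 0 0 x] sW(1)[of c 0 0] by auto

lemma sW_additive: "additive (smulW c)"
  by unfold_locales (rule sW(1))

lemma sW_diff: "smulW c (x - y) = smulW c x - smulW c y"
  by (rule additive.diff[OF sW_additive])

lemma sW_sum: "smulW c (sum f A) = (\<Sum>i\<in>A. smulW c (f i))"
  by (rule additive.sum[OF sW_additive])

lemma YWadd: "YW u k (x + y) = YW u k x + YW u k y"
  using YW_linear_right[of u k, unfolded Vector_Spaces.linear_iff] by blast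
lemma YWscale: "YW u k (smulW c x) = smulW c (YW u k x)"
  using YW_linear_right[of u k, unfolded Vector_Spaces.linear_iff] by blast

lemma YW0[simp]: "YW u k 0 = 0"
  using YWadd[of u k 0 0] by simp

lemma YWsum: "YW u k (sum f A) = (\<Sum>i\<in>A. YW u k (f i))"
  by (induct A rule: infinite_finite_induct) (auto simp: YWadd)

lemma YWpow_scale: "(YW u k ^^ t) (smulW c x) = smulW c ((YW u k ^^ t) x)"
  by (induct t) (auto simp: YWscale)

lemma YWpow0[simp]: "(YW u k ^^ t) 0 = 0"
  by (induct t) auto

lemma nmul_W: "nmul k (x::'w) = smulW (of_nat k) x"
  by (induct k) (auto simp: nmul_Suc sW(2) sW(4) add.commute)

lemma nmul_p[simp]: "nmul p (x::'w) = 0"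
  using char of_nat_CHAR[where 'a='f] by (simp add: nmul_W)

definition cc :: "nat \<Rightarrow> nat \<Rightarrow> 'f" where "cc n i = of_int (ibinom (int n + int i - 1) i)"
definition dd :: "nat \<Rightarrow> nat \<Rightarrow> 'f" where "dd n i = (-1) powi (1 - int n) * cc n i"

definition Lop :: "nat \<Rightarrow> (int \<Rightarrow> 'w \<Rightarrow> 'w) \<Rightarrow> int \<Rightarrow> 'w \<Rightarrow> 'w" where
  "Lop n F k w = fin_sum (\<lambda>i. smulW (cc n i) (YW a (- int n - int i) (F (k + int i) w)))"
definition Rop :: "nat \<Rightarrow> (int \<Rightarrow> 'w \<Rightarrow> 'w) \<Rightarrow> int \<Rightarrow> 'w \<Rightarrow> 'w" where
  "Rop n F k w = fin_sum (\<lambda>i. smulW (dd n i) (F (k - int n - int i) (YW a (int i) w)))"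
definition Sset :: "(int \<Rightarrow> 'w \<Rightarrow> 'w) set" where
  "Sset = {F. (\<forall>w. \<exists>N. \<forall>k\<ge>N. F k w = 0) \<and> (\<forall>k. F k 0 = 0)}"
definition Ivac :: "int \<Rightarrow> 'w \<Rightarrow> 'w" where "Ivac = (\<lambda>k w. if k = -1 then w else 0)"

lemma Lop_eq:
  assumes "\<And>i. i \<ge> N \<Longrightarrow> F (k + int i) w = 0"
  shows "Lop n F k w = (\<Sum>i<N. smulW (cc n i) (YW a (- int n - int i) (F (k + int i) w)))"
  unfolding Lop_def by (rule fin_sum_bound) (simp add: assms)

lemma Rop_eq:
  assumes "\<And>i. i \<ge> N \<Longrightarrow> F (k - int n - int i) (YW a (int i) w) = 0"
  shows "Rop n F k w = (\<Sum>i<N. smulW (dd n i) (F (k - int n - int i) (YW a (int i) w)))"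
  unfolding Rop_def by (rule fin_sum_bound) (simp add: assms)

lemma aTrunc: "\<exists>M. \<forall>i\<ge>M. YW a (int i) w = 0"
proof -
  obtain N where "\<forall>n\<ge>N. YW a n w = 0" using truncationW by blast
  then show ?thesis by (intro exI[of _ "nat N"]) auto
qed

lemma SsetD: "F \<in> Sset \<Longrightarrow> \<exists>N. \<forall>k\<ge>N. F k w = 0" "F \<in> Sset \<Longrightarrow> F k 0 = 0"
  unfolding Sset_def by auto

lemma unif_trunc:
  fixes M :: nat
  assumes "F \<in> Sset"
  shows "\<exists>B. \<forall>j<M. \<forall>k\<ge>B. F k (v j) = 0"
proof -
  have "\<forall>j. \<exists>N. \<forall>k\<ge>N. F k (v j) = 0" using SsetD(1)[OF assms] by blast
  then obtain Nf where Nf: "\<And>j k. k \<ge> Nf j \<Longrightarrow> F k (v j) = 0" by metis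
  have "Nf j \<le> (\<Sum>i<M. \<bar>Nf i\<bar>)" if "j < M" for j
  proof -
    have "\<bar>Nf j\<bar> \<le> (\<Sum>i<M. \<bar>Nf i\<bar>)"
      by (rule member_le_sum[of j "{..<M}"]) (use that in auto)
    then show ?thesis by simp
  qed
  then show ?thesis using Nf by (intro exI[of _ "\<Sum>i<M. \<bar>Nf i\<bar>"]) force
qed

lemma Lop_S: assumes "F \<in> Sset" shows "Lop n F \<in> Sset"
proof -
  have "\<exists>N. \<forall>k\<ge>N. Lop n F k w = 0" for w
  proof -
    obtain N where N: "\<And>k. k \<ge> N \<Longrightarrow> F k w = 0" using SsetD(1)[OF assms] by blast
    show ?thesis by (rule exI[of _ N]) (auto simp: Lop_def fin_sum_def N)
  qed
  moreover have "Lop n F k 0 = 0" for k using SsetD(2)[OF assms] by (simp add: Lop_def fin_sum_def)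
  ultimately show ?thesis unfolding Sset_def by blast
qed

lemma Rop_S: assumes "F \<in> Sset" shows "Rop n F \<in> Sset"
proof -
  have "\<exists>N. \<forall>k\<ge>N. Rop n F k w = 0" for w
  proof -
    obtain M where M: "\<And>i. i \<ge> M \<Longrightarrow> YW a (int i) w = 0" using aTrunc by blast
    obtain B where B: "\<And>j k. j < M \<Longrightarrow> k \<ge> B \<Longrightarrow> F k (YW a (int j) w) = 0"
      using unif_trunc[OF assms, of M "\<lambda>j. YW a (int j) w"] by blast
    have "Rop n F k w = 0" if "k \<ge> B + int n + int M" for k
    proof -
      have "F (k - int n - int i) (YW a (int i) w) = 0" for i
      proof (cases "i < M")
        case True then show ?thesis using B that by auto
      next
        case False then show ?thesis using M SsetD(2)[OF assms] by simp
      qed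
      then show ?thesis by (simp add: Rop_def fin_sum_def)
    qed
    then show ?thesis by blast
  qed
  moreover have "Rop n F k 0 = 0" for k using SsetD(2)[OF assms] by (simp add: Rop_def fin_sum_def)
  ultimately show ?thesis unfolding Sset_def by blast
qed

lemma Sset_add: "F \<in> Sset \<Longrightarrow> G \<in> Sset \<Longrightarrow> F + G \<in> Sset"
proof -
  assume F: "F \<in> Sset" and G: "G \<in> Sset"
  have "\<exists>N. \<forall>k\<ge>N. (F + G) k w = 0" for w
  proof -
    obtain N1 where "\<And>k. k \<ge> N1 \<Longrightarrow> F k w = 0" using SsetD(1)[OF F] by blast
    moreover obtain N2 where "\<And>k. k \<ge> N2 \<Longrightarrow> G k w = 0" using SsetD(1)[OF G] by blast
    ultimately show ?thesis by (intro exI[of _ "max N1 N2"]) auto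
  qed
  then show ?thesis using F G unfolding Sset_def by auto
qed

lemma Sset_0: "0 \<in> Sset" unfolding Sset_def by auto

lemma Ivac_S: "Ivac \<in> Sset"
proof -
  have "\<exists>N. \<forall>k\<ge>N. Ivac k w = 0" for w by (rule exI[of _ 0]) (simp add: Ivac_def)
  moreover have "Ivac k 0 = 0" for k by (simp add: Ivac_def)
  ultimately show ?thesis unfolding Sset_def by blast
qed

lemma YW_S: "YW b \<in> Sset"
  unfolding Sset_def using truncationW by auto

lemma Lop_add: assumes F: "F \<in> Sset" and G: "G \<in> Sset" shows "Lop n (F + G) = Lop n F + Lop n G"
proof (intro ext)
  fix k w
  obtain N1 where N1: "\<And>k. k \<ge> N1 \<Longrightarrow> F k w = 0" using SsetD(1)[OF F] by blast
  obtain N2 where N2: "\<And>k. k \<ge> N2 \<Longrightarrow> G k w = 0" using SsetD(1)[OF G] by blast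
  define N where "N = nat (max N1 N2 - k)"
  have b: "F (k + int i) w = 0" "G (k + int i) w = 0" if "i \<ge> N" for i
    using N1 N2 that by (auto simp: N_def)
  show "Lop n (F + G) k w = (Lop n F + Lop n G) k w"
    by (simp add: Lop_eq[of N] b sum.distrib YWadd sW(1))
qed

lemma Rop_add: assumes F: "F \<in> Sset" and G: "G \<in> Sset" shows "Rop n (F + G) = Rop n F + Rop n G"
proof (intro ext)
  fix k w
  obtain M where M: "\<And>i. i \<ge> M \<Longrightarrow> YW a (int i) w = 0" using aTrunc by blast
  have b: "F (k - int n - int i) (YW a (int i) w) = 0" "G (k - int n - int i) (YW a (int i) w) = 0"
    if "i \<ge> M" for i
    using M that SsetD(2)[OF F] SsetD(2)[OF G] by auto
  show "Rop n (F + G) k w = (Rop n F + Rop n G) k w"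
    by (simp add: Rop_eq[of M] b sum.distrib sW(1))
qed

lemma LR_comm: assumes F: "F \<in> Sset" shows "Lop n (Rop n F) = Rop n (Lop n F)"
proof (intro ext)
  fix k w
  obtain M where M: "\<And>i. i \<ge> M \<Longrightarrow> YW a (int i) w = 0" using aTrunc by blast
  obtain B where B: "\<And>j k. j < M \<Longrightarrow> k \<ge> B \<Longrightarrow> F k (YW a (int j) w) = 0"
    using unif_trunc[OF F, of M "\<lambda>j. YW a (int j) w"] by blast
  define N where "N = nat (B - k + int n + int M)"
  have z: "F (k + int i - int n - int j) (YW a (int j) w) = 0" if "i \<ge> N \<or> j \<ge> M" for i j
  proof (cases "j \<ge> M")
    case True then show ?thesis using M SsetD(2)[OF F] by simp
  next
    case False then show ?thesis using that B[of j] by (auto simp: N_def)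
  qed
  have R: "Rop n F (k + int i) w = (\<Sum>j<M. smulW (dd n j) (F (k + int i - int n - int j) (YW a (int j) w)))" for i
    by (rule Rop_eq) (use z in auto)
  have L0: "Lop n F (k - int n - int j) (YW a (int j) w) =
     (\<Sum>i<N. smulW (cc n i) (YW a (- int n - int i) (F (k - int n - int j + int i) (YW a (int j) w))))" for j
  proof (rule Lop_eq)
    fix i assume "N \<le> i"
    then show "F (k - int n - int j + int i) (YW a (int j) w) = 0" using z[of i j] by (simp add: algebra_simps)
  qed
  have L: "Lop n F (k - int n - int j) (YW a (int j) w) =
     (\<Sum>i<N. smulW (cc n i) (YW a (- int n - int i) (F (k + int i - int n - int j) (YW a (int j) w))))" for j
    unfolding L0 by (simp add: algebra_simps)
  have "Lop n (Rop n F) k w = (\<Sum>i<N. smulW (cc n i) (YW a (- int n - int i) (Rop n F (k + int i) w)))"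
    by (rule Lop_eq) (simp add: R z sum.neutral)
  also have "\<dots> = (\<Sum>i<N. \<Sum>j<M. smulW (cc n i * dd n j) (YW a (- int n - int i) (F (k + int i - int n - int j) (YW a (int j) w))))"
    by (simp add: R YWsum sW_sum YWscale sW(3))
  also have "\<dots> = (\<Sum>j<M. \<Sum>i<N. smulW (dd n j * cc n i) (YW a (- int n - int i) (F (k + int i - int n - int j) (YW a (int j) w))))"
    by (subst sum.swap) (simp add: mult.commute)
  also have "\<dots> = Rop n (Lop n F) k w"
    by (subst Rop_eq[of M]) (simp_all add: M SsetD(2)[OF Lop_S[OF F]] L sW_sum sW(3))
  finally show "Lop n (Rop n F) k w = Rop n (Lop n F) k w" .
qed

lemma sW_neg: "smulW (- c) x = - smulW c x"
  using sW(2)[of c "-c" x] by (simp add: eq_neg_iff_add_eq_0 add.commute)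

lemma cc_coeff: "n \<ge> 1 \<Longrightarrow> (-1)^i * (of_int (ibinom (- int n) i) :: 'f) = cc n i"
proof -
  assume "n \<ge> 1"
  then have "(of_int ((-1)^i * ibinom (- int n) i) :: 'f) = of_int (ibinom (int n + int i - 1) i)"
    by (simp only: ibinom_neg)
  then show ?thesis by (simp add: cc_def)
qed

lemma dd_coeff: "dd n i = - (cc n i * (-1) powi (- int n))"
proof -
  have "(-1::'f) powi (1 - int n) = (-1) powi 1 * (-1) powi (- int n)"
    by (subst power_int_add[symmetric]) auto
  then show ?thesis by (simp add: dd_def)
qed

lemma step:
  assumes n: "n \<ge> 1"
  shows "YW (Y a (- int n) b) = Lop n (YW b) + Rop n (YW b)"
proof (intro ext)
  fix k w
  obtain N0 where N0: "\<And>m. m \<ge> N0 \<Longrightarrow> YW b m w = 0" using truncationW by blast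
  obtain M where M: "\<And>i. i \<ge> M \<Longrightarrow> YW a (int i) w = 0" using aTrunc by blast
  define N where "N = max (nat (N0 - k)) M"
  have zb: "YW b (k + int i) w = 0" if "i \<ge> N" for i using that N0 by (auto simp: N_def)
  have za: "YW a (int i) w = 0" if "i \<ge> N" for i using that M by (auto simp: N_def)
  have J: "fin_sum (\<lambda>i. smulW ((-1)^i * of_int (ibinom (- int n) i))
          (YW a (- int n + 0 - int i) (YW b (k + int i) w)
           - smulW ((-1) powi (- int n)) (YW b (- int n + k - int i) (YW a (0 + int i) w))))
      = fin_sum (\<lambda>i. smulW ((-1)^i * of_int (ibinom (int i - 0 - 1) i))
          (YW (Y a (- int n + int i) b) (0 + k - int i) w))"
    by (rule jacobiW)
  have T: "smulW ((-1)^i * of_int (ibinom (- int n) i))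
          (YW a (- int n + 0 - int i) (YW b (k + int i) w)
           - smulW ((-1) powi (- int n)) (YW b (- int n + k - int i) (YW a (0 + int i) w)))
     = smulW (cc n i) (YW a (- int n - int i) (YW b (k + int i) w))
       + smulW (dd n i) (YW b (k - int n - int i) (YW a (int i) w))" for i
    by (simp add: cc_coeff[OF n] dd_coeff sW_diff sW(3) sW_neg algebra_simps)
  have "fin_sum (\<lambda>i. smulW ((-1)^i * of_int (ibinom (- int n) i))
          (YW a (- int n + 0 - int i) (YW b (k + int i) w)
           - smulW ((-1) powi (- int n)) (YW b (- int n + k - int i) (YW a (0 + int i) w))))
     = (\<Sum>i<N. smulW (cc n i) (YW a (- int n - int i) (YW b (k + int i) w))
       + smulW (dd n i) (YW b (k - int n - int i) (YW a (int i) w)))"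
    unfolding T by (rule fin_sum_bound) (simp add: za zb)
  also have "\<dots> = Lop n (YW b) k w + Rop n (YW b) k w"
    by (simp add: sum.distrib Lop_eq[of N] Rop_eq[of N] za zb)
  finally have L: "fin_sum (\<lambda>i. smulW ((-1)^i * of_int (ibinom (- int n) i))
          (YW a (- int n + 0 - int i) (YW b (k + int i) w)
           - smulW ((-1) powi (- int n)) (YW b (- int n + k - int i) (YW a (0 + int i) w))))
     = Lop n (YW b) k w + Rop n (YW b) k w" .
  have "fin_sum (\<lambda>i. smulW ((-1)^i * of_int (ibinom (int i - 0 - 1) i))
          (YW (Y a (- int n + int i) b) (0 + k - int i) w)) = (\<Sum>i<1. smulW ((-1)^i * of_int (ibinom (int i - 0 - 1) i))
          (YW (Y a (- int n + int i) b) (0 + k - int i) w))"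
    by (rule fin_sum_bound) (simp only: ibinom_vac, simp)
  also have "\<dots> = YW (Y a (- int n) b) k w"
    by (simp only: ibinom_vac, simp add: sW(4))
  finally show "YW (Y a (- int n) b) k w = (Lop n (YW b) + Rop n (YW b)) k w"
    using J L by simp
qed


end


context L5 begin
lemma iter:
  assumes n: "n \<ge> 1"
  shows "YW ((Y a (- int n) ^^ s) vac) = ((\<lambda>F. Lop n F + Rop n F) ^^ s) Ivac"
proof (induct s)
  case 0 then show ?case by (auto simp: Ivac_def vacuumW)
next
  case (Suc s) then show ?case by (simp add: step[OF n])
qed

lemma addop_Lop: "addop Sset (Lop n)"
  by unfold_locales (auto simp: Sset_0 Sset_add Lop_S Lop_add)

lemma addop_Rop: "addop Sset (Rop n)"
  by unfold_locales (auto simp: Sset_0 Sset_add Rop_S Rop_add)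

lemma frobLR:
  assumes n: "n \<ge> 1"
  shows "YW ((Y a (- int n) ^^ p) vac) = (Lop n ^^ p) Ivac + (Rop n ^^ p) Ivac"
proof -
  have z: "nmul p (u :: int \<Rightarrow> 'w \<Rightarrow> 'w) = 0" for u
    by (intro ext) (simp add: nmul_fun_apply)
  have "((\<lambda>u. Lop n u + Rop n u)^^p) Ivac = (Lop n^^p) Ivac + (Rop n^^p) Ivac"
    by (rule frob2[of Sset "Lop n" "Rop n" Ivac p, OF addop_Lop addop_Rop LR_comm Ivac_S prime z])
  then show ?thesis unfolding iter[OF n] .
qed


definition Xop :: "nat \<Rightarrow> nat \<Rightarrow> (nat \<Rightarrow> 'w) \<Rightarrow> nat \<Rightarrow> 'w" where
  "Xop n j G m = (if j \<le> m then smulW (cc n j) (YW a (- int n - int j) (G (m - j))) else 0)"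
definition delta :: "'w \<Rightarrow> nat \<Rightarrow> 'w" where "delta w m = (if m = 0 then w else 0)"

lemma Lpow_pos: "k \<ge> 0 \<Longrightarrow> (Lop n ^^ t) Ivac k w = 0"
proof (induct t arbitrary: k w)
  case 0 then show ?case by (simp add: Ivac_def)
next
  case (Suc t) then show ?case by (simp add: Lop_def fin_sum_def)
qed

lemma sum_if_le:
  assumes "m \<le> (M::nat)"
  shows "(\<Sum>j\<le>M. if j \<le> m then f j else 0) = (\<Sum>j\<le>m. f j)"
  by (rule sum.mono_neutral_cong_right) (use assms in auto)

lemma Lpow_X:
  assumes "m \<le> M"
  shows "(Lop n ^^ t) Ivac (- int m - 1) w = ((\<lambda>G. \<Sum>j\<le>M. Xop n j G) ^^ t) (delta w) m"
  using assms
proof (induct t arbitrary: m)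
  case 0 then show ?case by (simp add: Ivac_def delta_def)
next
  case (Suc t)
  define G where "G = ((\<lambda>G. \<Sum>j\<le>M. Xop n j G) ^^ t) (delta w)"
  have "(Lop n ^^ Suc t) Ivac (- int m - 1) w = Lop n ((Lop n ^^ t) Ivac) (- int m - 1) w" by simp
  also have "\<dots> = (\<Sum>i<Suc m. smulW (cc n i) (YW a (- int n - int i) ((Lop n ^^ t) Ivac (- int m - 1 + int i) w)))"
    by (rule Lop_eq) (simp add: Lpow_pos)
  also have "\<dots> = (\<Sum>i\<le>m. smulW (cc n i) (YW a (- int n - int i) (G (m - i))))"
  proof (rule sum.cong)
    fix i assume "i \<in> {..m}"
    then have i: "i \<le> m" by auto
    have e: "- int m - 1 + int i = - int (m - i) - 1" using i by simp
    have "(Lop n ^^ t) Ivac (- int m - 1 + int i) w = G (m - i)"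
      unfolding e G_def by (rule Suc(1)) (use Suc(2) in simp)
    then show "smulW (cc n i) (YW a (- int n - int i) ((Lop n ^^ t) Ivac (- int m - 1 + int i) w))
       = smulW (cc n i) (YW a (- int n - int i) (G (m - i)))" by simp
  qed (auto simp: lessThan_Suc_atMost)
  also have "\<dots> = (\<Sum>j\<le>M. Xop n j G m)"
    unfolding Xop_def by (rule sum_if_le[symmetric]) (use Suc in auto)
  also have "\<dots> = ((\<lambda>G. \<Sum>j\<le>M. Xop n j G) ^^ Suc t) (delta w) m"
    by (simp add: G_def sum_fun_apply)
  finally show ?case .
qed

lemma addop_Xop: "addop UNIV (Xop n j)"
  by unfold_locales (auto simp: fun_eq_iff Xop_def YWadd sW(1))

lemma comm_neg_app: "i < 0 \<Longrightarrow> j < 0 \<Longrightarrow> YW a i (YW a j x) = YW a j (YW a i x)"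
  using comm_neg[of i j] by (metis comp_apply)

lemma comm_pos_app: "i \<ge> 0 \<Longrightarrow> j \<ge> 0 \<Longrightarrow> YW a i (YW a j x) = YW a j (YW a i x)"
  using comm_pos[of i j] by (metis comp_apply)

lemma Xop_comm: "n \<ge> 1 \<Longrightarrow> Xop n i (Xop n j G) = Xop n j (Xop n i G)"
proof (rule ext)
  fix m assume n: "n \<ge> 1"
  have c: "YW a (- int n - int i) (YW a (- int n - int j) x) = YW a (- int n - int j) (YW a (- int n - int i) x)" for x
    by (rule comm_neg_app) (use n in auto)
  show "Xop n i (Xop n j G) m = Xop n j (Xop n i G) m"
  proof (cases "i + j \<le> m")
    case True
    then have e: "m - i - j = m - j - i" by simp
    show ?thesis using True by (simp add: Xop_def YWscale sW(3) c e mult.commute add.commute)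
  next
    case False
    then show ?thesis by (auto simp: Xop_def)
  qed
qed


lemma Xpow: "(Xop n j ^^ t) G m = (if t * j \<le> m then smulW (cc n j ^ t) ((YW a (- int n - int j) ^^ t) (G (m - t * j))) else 0)"
proof (induct t arbitrary: m)
  case 0 then show ?case by (simp add: sW(4))
next
  case (Suc t)
  have "(Xop n j ^^ Suc t) G m = Xop n j ((Xop n j ^^ t) G) m" by simp
  also have "\<dots> = (if j \<le> m then smulW (cc n j) (YW a (- int n - int j) ((Xop n j ^^ t) G (m - j))) else 0)"
    by (simp only: Xop_def)
  also have "\<dots> = (if Suc t * j \<le> m then smulW (cc n j ^ Suc t) ((YW a (- int n - int j) ^^ Suc t) (G (m - Suc t * j))) else 0)"
  proof (cases "Suc t * j \<le> m")
    case True
    then have "j \<le> m" "t * j \<le> m - j" "m - j - t * j = m - Suc t * j" by auto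
    then show ?thesis using True by (simp add: Suc YWscale sW(3))
  next
    case False
    then have "\<not> (j \<le> m \<and> t * j \<le> m - j)" by auto
    then show ?thesis using False by (auto simp: Suc)
  qed
  finally show ?case .
qed

lemma cc_frob: "cc n j ^ p = cc n j"
  unfolding cc_def by (rule of_int_frob[OF prime char])

lemma dd_frob: "dd n j ^ p = dd n j"
  unfolding dd_def power_mult_distrib cc_frob minus_one_powi_frob[OF prime char] ..


lemma Lpart:
  assumes n: "n \<ge> 1"
  shows "(Lop n ^^ p) Ivac (- m - 1) w = series_coeff (\<lambda>j::nat. int j * int p)
                (\<lambda>j. smulW (cc n j) ((YW a (- int n - int j) ^^ p) w)) m"
proof (cases "m < 0")
  case True
  have "int j * int p \<noteq> m" for j
  proof -
    have "int j * int p \<ge> 0" by simp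
    then show ?thesis using True by linarith
  qed
  then have "{j::nat. int j * int p = m} = {}" by auto
  then show ?thesis using True by (simp add: series_coeff_def Lpow_pos)
next
  case False
  then obtain m' where m: "m = int m'" by (metis nonneg_int_cases not_less)
  have p0: "p > 0" using prime prime_gt_0_nat by blast
  have "(Lop n ^^ p) Ivac (- m - 1) w = ((\<lambda>G. \<Sum>j\<in>{..m'}. Xop n j G) ^^ p) (delta w) m'"
    unfolding m by (rule Lpow_X) simp
  also have "\<dots> = (\<Sum>j\<in>{..m'}. (Xop n j ^^ p) (delta w)) m'"
  proof -
    have z: "nmul p (u :: nat \<Rightarrow> 'w) = 0" for u by (intro ext) (simp add: nmul_fun_apply)
    have "((\<lambda>G. \<Sum>j\<in>{..m'}. Xop n j G) ^^ p) (delta w) = (\<Sum>j\<in>{..m'}. (Xop n j ^^ p) (delta w))"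
      by (rule frob_sum[of "{..m'}" UNIV "Xop n" "delta w" p]) (auto simp: addop_Xop Xop_comm[OF n] prime z)
    then show ?thesis by simp
  qed
  also have "\<dots> = (\<Sum>j\<le>m'. if int j * int p = m then smulW (cc n j) ((YW a (- int n - int j) ^^ p) w) else 0)"
    unfolding sum_fun_apply
  proof (rule sum.cong)
    fix j assume "j \<in> {..m'}"
    show "(Xop n j ^^ p) (delta w) m' = (if int j * int p = m then smulW (cc n j) ((YW a (- int n - int j) ^^ p) w) else 0)"
    proof (cases "m' = p * j")
      case True
      then have "int j * int p = m" using m by simp
      then show ?thesis using True by (simp add: Xpow delta_def cc_frob)
    next
      case False
      then have "int j * int p \<noteq> m" using m by (metis mult.commute of_nat_eq_iff of_nat_mult)
      then show ?thesis using False by (simp add: Xpow delta_def)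
    qed
  qed simp
  also have "\<dots> = (\<Sum>j\<in>{j\<in>{..m'}. int j * int p = m}. smulW (cc n j) ((YW a (- int n - int j) ^^ p) w))"
    by (rule sum.inter_filter[symmetric]) simp
  also have "{j\<in>{..m'}. int j * int p = m} = {j. int j * int p = m}"
  proof -
    have "j \<le> m'" if "int j * int p = m" for j
    proof -
      have "j * p = m'" using that m by (metis of_nat_eq_iff of_nat_mult)
      moreover have "j * 1 \<le> j * p" using p0 by (intro mult_le_mono2) simp
      ultimately show ?thesis by simp
    qed
    then show ?thesis by auto
  qed
  finally show ?thesis by (simp add: series_coeff_def)
qed


definition Zop :: "nat \<Rightarrow> nat \<Rightarrow> (nat \<Rightarrow> 'w \<Rightarrow> 'w) \<Rightarrow> nat \<Rightarrow> 'w \<Rightarrow> 'w" where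
  "Zop n j H r v = (if n + j \<le> r then smulW (dd n j) (H (r - n - j) (YW a (int j) v)) else 0)"
definition delta2 :: "nat \<Rightarrow> 'w \<Rightarrow> 'w" where "delta2 r v = (if r = 0 then v else 0)"

lemma Rpow_neg: "k < -1 \<Longrightarrow> (Rop n ^^ t) Ivac k w = 0"
proof (induct t arbitrary: k w)
  case 0 then show ?case by (simp add: Ivac_def)
next
  case (Suc t)
  have "(Rop n ^^ t) Ivac (k - int n - int i) v = 0" for i v
    by (rule Suc(1)) (use Suc(2) in simp)
  then show ?case by (simp add: Rop_eq[of 0])
qed

lemma Rpow_Z:
  assumes "r \<le> M"
  shows "(Rop n ^^ t) Ivac (int r - 1) w = ((\<lambda>H. \<Sum>j\<le>M. Zop n j H) ^^ t) delta2 r w"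
  using assms
proof (induct t arbitrary: r w)
  case 0 then show ?case by (simp add: Ivac_def delta2_def)
next
  case (Suc t)
  define H where "H = ((\<lambda>H. \<Sum>j\<le>M. Zop n j H) ^^ t) delta2"
  have "(Rop n ^^ Suc t) Ivac (int r - 1) w = Rop n ((Rop n ^^ t) Ivac) (int r - 1) w" by simp
  also have "\<dots> = (\<Sum>i<Suc r. smulW (dd n i) ((Rop n ^^ t) Ivac (int r - 1 - int n - int i) (YW a (int i) w)))"
    by (rule Rop_eq) (simp add: Rpow_neg)
  also have "\<dots> = (\<Sum>i\<le>r. Zop n i H r w)"
  proof (rule sum.cong)
    fix i assume "i \<in> {..r}"
    show "smulW (dd n i) ((Rop n ^^ t) Ivac (int r - 1 - int n - int i) (YW a (int i) w)) = Zop n i H r w"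
    proof (cases "n + i \<le> r")
      case True
      have e: "int r - 1 - int n - int i = int (r - n - i) - 1" using True by simp
      have "(Rop n ^^ t) Ivac (int r - 1 - int n - int i) (YW a (int i) w) = H (r - n - i) (YW a (int i) w)"
        unfolding e H_def by (rule Suc(1)) (use Suc(2) in simp)
      then show ?thesis using True by (simp add: Zop_def)
    next
      case False
      then have "(Rop n ^^ t) Ivac (int r - 1 - int n - int i) (YW a (int i) w) = 0"
        by (intro Rpow_neg) simp
      then show ?thesis using False by (simp add: Zop_def)
    qed
  qed (auto simp: lessThan_Suc_atMost)
  also have "\<dots> = (\<Sum>j\<le>M. Zop n j H r w)"
    by (rule sum.mono_neutral_left) (use Suc(2) in \<open>auto simp: Zop_def\<close>)
  also have "\<dots> = ((\<lambda>H. \<Sum>j\<le>M. Zop n j H) ^^ Suc t) delta2 r w"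
    by (simp add: H_def sum_fun_apply)
  finally show ?case .
qed

lemma addop_Zop: "addop UNIV (Zop n j)"
  by unfold_locales (auto simp: fun_eq_iff Zop_def sW(1))

lemma Zop_comm: "Zop n i (Zop n j H) = Zop n j (Zop n i H)"
proof (intro ext)
  fix r v
  have c: "YW a (int j) (YW a (int i) v) = YW a (int i) (YW a (int j) v)"
    by (rule comm_pos_app) auto
  show "Zop n i (Zop n j H) r v = Zop n j (Zop n i H) r v"
  proof (cases "n + i + (n + j) \<le> r")
    case True
    then have e: "r - n - i - n - j = r - n - j - n - i" by simp
    have e2: "n + i + n + j = n + j + n + i" by simp
    show ?thesis using True by (simp add: Zop_def sW(3) c e e2 mult.commute)
  next
    case False
    then show ?thesis by (auto simp: Zop_def)
  qed
qed

lemma Zpow: "(Zop n j ^^ t) H r v = (if t * (n + j) \<le> r then smulW (dd n j ^ t) (H (r - t * (n + j)) ((YW a (int j) ^^ t) v)) else 0)"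
proof (induct t arbitrary: r v)
  case 0 then show ?case by (simp add: sW(4))
next
  case (Suc t)
  have "(Zop n j ^^ Suc t) H r v = Zop n j ((Zop n j ^^ t) H) r v" by simp
  also have "\<dots> = (if n + j \<le> r then smulW (dd n j) ((Zop n j ^^ t) H (r - n - j) (YW a (int j) v)) else 0)"
    by (simp only: Zop_def)
  also have "\<dots> = (if Suc t * (n + j) \<le> r then smulW (dd n j ^ Suc t) (H (r - Suc t * (n + j)) ((YW a (int j) ^^ Suc t) v)) else 0)"
  proof (cases "Suc t * (n + j) \<le> r")
    case True
    then have "n + j \<le> r" "t * (n + j) \<le> r - n - j" "r - n - j - t * (n + j) = r - Suc t * (n + j)" by auto
    moreover have "(YW a (int j) ^^ t) (YW a (int j) v) = (YW a (int j) ^^ Suc t) v"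
      by (simp only: funpow_Suc_right comp_apply)
    ultimately show ?thesis using True by (simp add: Suc sW(3))
  next
    case False
    then have "\<not> (n + j \<le> r \<and> t * (n + j) \<le> r - n - j)" by auto
    then show ?thesis using False by (auto simp: Suc)
  qed
  finally show ?case .
qed

lemma Rpart:
  shows "(Rop n ^^ p) Ivac (- m - 1) w = series_coeff (\<lambda>j::nat. - (int p * (int n + int j)))
                (\<lambda>j. smulW (dd n j) ((YW a (int j) ^^ p) w)) m"
proof (cases "m > 0")
  case True
  have "- (int p * (int n + int j)) \<noteq> m" for j
  proof -
    have "int p * (int n + int j) \<ge> 0" by simp
    then show ?thesis using True by linarith
  qed
  then have "{j::nat. - (int p * (int n + int j)) = m} = {}" by auto
  then show ?thesis using True by (simp add: series_coeff_def Rpow_neg)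
next
  case False
  define r where "r = nat (- m)"
  have m: "m = - int r" using False by (simp add: r_def)
  have p0: "p > 0" using prime prime_gt_0_nat by blast
  have "(Rop n ^^ p) Ivac (- m - 1) w = ((\<lambda>H. \<Sum>j\<in>{..r}. Zop n j H) ^^ p) delta2 r w"
    unfolding m using Rpow_Z[of r r p n w] by simp
  also have "\<dots> = (\<Sum>j\<in>{..r}. (Zop n j ^^ p) delta2) r w"
  proof -
    have z: "nmul p (u :: nat \<Rightarrow> 'w \<Rightarrow> 'w) = 0" for u by (intro ext) (simp add: nmul_fun_apply)
    have "((\<lambda>H. \<Sum>j\<in>{..r}. Zop n j H) ^^ p) delta2 = (\<Sum>j\<in>{..r}. (Zop n j ^^ p) delta2)"
      by (rule frob_sum[of "{..r}" UNIV "Zop n" delta2 p]) (auto simp: addop_Zop Zop_comm prime z)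
    then show ?thesis by simp
  qed
  also have "\<dots> = (\<Sum>j\<le>r. if - (int p * (int n + int j)) = m then smulW (dd n j) ((YW a (int j) ^^ p) w) else 0)"
    unfolding sum_fun_apply
  proof (rule sum.cong)
    fix j assume "j \<in> {..r}"
    show "(Zop n j ^^ p) delta2 r w = (if - (int p * (int n + int j)) = m then smulW (dd n j) ((YW a (int j) ^^ p) w) else 0)"
    proof (cases "r = p * (n + j)")
      case True
      then have "- (int p * (int n + int j)) = m" using m by simp
      then show ?thesis using True by (simp add: Zpow delta2_def dd_frob)
    next
      case False
      then have "- (int p * (int n + int j)) \<noteq> m" using m
        by (metis minus_equation_iff of_nat_add of_nat_eq_iff of_nat_mult)
      then show ?thesis using False by (simp add: Zpow delta2_def)
    qed
  qed simp
  also have "\<dots> = (\<Sum>j\<in>{j\<in>{..r}. - (int p * (int n + int j)) = m}. smulW (dd n j) ((YW a (int j) ^^ p) w))"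
    by (rule sum.inter_filter[symmetric]) simp
  also have "{j\<in>{..r}. - (int p * (int n + int j)) = m} = {j. - (int p * (int n + int j)) = m}"
  proof -
    have "j \<le> r" if "- (int p * (int n + int j)) = m" for j
    proof -
      have "p * (n + j) = r" using that m by (metis minus_equation_iff of_nat_add of_nat_eq_iff of_nat_mult)
      moreover have "j * 1 \<le> (n + j) * p" using p0 by (intro mult_le_mono) simp_all
      ultimately show ?thesis by (simp add: mult.commute)
    qed
    then show ?thesis by auto
  qed
  finally show ?thesis by (simp add: series_coeff_def)
qed


lemma main1:
  assumes n: "n \<ge> 1"
  shows "YW ((Y a (- int n) ^^ p) vac) (- m - 1) w =
              series_coeff (\<lambda>j::nat. int j * int p)
                (\<lambda>j. smulW (of_int (ibinom (int n + int j - 1) j))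
                        ((YW a (- int n - int j) ^^ p) w)) m
            + series_coeff (\<lambda>j::nat. - (int p * (int n + int j)))
                (\<lambda>j. smulW ((-1) powi (1 - int n) * of_int (ibinom (int n + int j - 1) j))
                        ((YW a (int j) ^^ p) w)) m"
proof -
  have "YW ((Y a (- int n) ^^ p) vac) (- m - 1) w = (Lop n ^^ p) Ivac (- m - 1) w + (Rop n ^^ p) Ivac (- m - 1) w"
    using frobLR[OF n] by simp
  then show ?thesis unfolding Lpart[OF n] Rpart cc_def dd_def .
qed

end

lemma combine:
  fixes f :: "int \<Rightarrow> 'a::comm_monoid_add" and p :: nat
  assumes p0: "p > 0"
  shows "series_coeff (\<lambda>j::nat. int j * int p) (\<lambda>j. f (-1 - int j)) m
       + series_coeff (\<lambda>j::nat. - (int p * (1 + int j))) (\<lambda>j. f (int j)) m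
       = series_coeff (\<lambda>j::int. - (int p * (j + 1))) f m"
proof (cases "m \<ge> 0")
  case True
  have "- (int p * (1 + int j)) \<noteq> m" for j
  proof -
    have "int p * (1 + int j) > 0" using p0 by simp
    then show ?thesis using True by linarith
  qed
  then have e: "{j::nat. - (int p * (1 + int j)) = m} = {}" by auto
  have "(\<Sum>j | int j * int p = m. f (-1 - int j)) = (\<Sum>i | - (int p * (i + 1)) = m. f i)"
  proof (rule sum.reindex_bij_witness[of _ "\<lambda>i. nat (-1 - i)" "\<lambda>j. -1 - int j"])
    fix i :: int assume "i \<in> {i. - (int p * (i + 1)) = m}"
    then have i: "- (int p * (i + 1)) = m" by simp
    have "int p * (i + 1) \<le> 0" using i True by linarith
    then have "i + 1 \<le> 0" using p0 by (simp add: mult_le_0_iff)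
    then show "-1 - int (nat (-1 - i)) = i" by simp
    show "nat (-1 - i) \<in> {j. int j * int p = m}"
      using i \<open>i + 1 \<le> 0\<close> by (simp add: algebra_simps)
  next
    fix j :: nat assume "j \<in> {j. int j * int p = m}"
    then have j: "int j * int p = m" by simp
    show "nat (-1 - (-1 - int j)) = j" by simp
    show "-1 - int j \<in> {i. - (int p * (i + 1)) = m}" using j by (simp add: algebra_simps)
    show "f (-1 - int j) = f (-1 - int j)" ..
  qed
  then show ?thesis by (simp add: series_coeff_def e)
next
  case False
  have "int j * int p \<noteq> m" for j
  proof -
    have "int j * int p \<ge> 0" by simp
    then show ?thesis using False by linarith
  qed
  then have e: "{j::nat. int j * int p = m} = {}" by auto
  have "(\<Sum>j | - (int p * (1 + int j)) = m. f (int j)) = (\<Sum>i | - (int p * (i + 1)) = m. f i)"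
  proof (rule sum.reindex_bij_witness[of _ "\<lambda>i. nat i" "\<lambda>j. int j"])
    fix i :: int assume "i \<in> {i. - (int p * (i + 1)) = m}"
    then have i: "- (int p * (i + 1)) = m" by simp
    have "int p * (i + 1) > 0" using i False by linarith
    then have "i + 1 > 0" using p0 by (simp add: zero_less_mult_iff)
    then show "int (nat i) = i" by simp
    show "nat i \<in> {j. - (int p * (1 + int j)) = m}"
      using i \<open>i + 1 > 0\<close> by (simp add: algebra_simps)
  next
    fix j :: nat assume "j \<in> {j. - (int p * (1 + int j)) = m}"
    then have j: "- (int p * (1 + int j)) = m" by simp
    show "nat (int j) = j" by simp
    show "int j \<in> {i. - (int p * (i + 1)) = m}" using j by (simp add: algebra_simps)
    show "f (int j) = f (int j)" ..
  qed
  then show ?thesis by (simp add: series_coeff_def e)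
qed

context L5 begin

lemma main2:
  shows "YW ((Y a (-1) ^^ p) vac) (- m - 1) w =
              series_coeff (\<lambda>j::int. - (int p * (j + 1))) (\<lambda>j. (YW a j ^^ p) w) m"
proof -
  have p0: "p > 0" using prime prime_gt_0_nat by blast
  have d: "ibinom (int j) j = 1" for j using ibinom_diag[of j] by simp
  have "YW ((Y a (-1) ^^ p) vac) (- m - 1) w =
      series_coeff (\<lambda>j::nat. int j * int p) (\<lambda>j. (YW a (-1 - int j) ^^ p) w) m
    + series_coeff (\<lambda>j::nat. - (int p * (1 + int j))) (\<lambda>j. (YW a (int j) ^^ p) w) m"
    using main1[of 1 m w] by (simp add: d sW(4))
  also have "\<dots> = series_coeff (\<lambda>j::int. - (int p * (j + 1))) (\<lambda>j. (YW a j ^^ p) w) m"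
    by (rule combine[OF p0])
  finally show ?thesis .
qed

end

theorem lemma5:
  fixes smul :: "'f::field \<Rightarrow> 'v::ab_group_add \<Rightarrow> 'v"
    and vac :: 'v and Y :: "'v \<Rightarrow> int \<Rightarrow> 'v \<Rightarrow> 'v"
    and smulW :: "'f \<Rightarrow> 'w::ab_group_add \<Rightarrow> 'w"
    and YW :: "'v \<Rightarrow> int \<Rightarrow> 'w \<Rightarrow> 'w"
    and p :: nat and a :: 'v
  assumes "prime p" and "CHAR('f) = p"
    and "va_module smul vac Y smulW YW"
    and "\<And>i j. i \<ge> 0 \<Longrightarrow> j \<ge> 0 \<Longrightarrow> YW a i \<circ> YW a j = YW a j \<circ> YW a i"
    and "\<And>i j. i < 0 \<Longrightarrow> j < 0 \<Longrightarrow> YW a i \<circ> YW a j = YW a j \<circ> YW a i"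
  shows "(\<forall>n::nat. n \<ge> 1 \<longrightarrow> (\<forall>m w.
            YW ((Y a (- int n) ^^ p) vac) (- m - 1) w =
              series_coeff (\<lambda>j::nat. int j * int p)
                (\<lambda>j. smulW (of_int (ibinom (int n + int j - 1) j))
                        ((YW a (- int n - int j) ^^ p) w)) m
            + series_coeff (\<lambda>j::nat. - (int p * (int n + int j)))
                (\<lambda>j. smulW ((-1) powi (1 - int n) * of_int (ibinom (int n + int j - 1) j))
                        ((YW a (int j) ^^ p) w)) m))
       \<and> (\<forall>m w. YW ((Y a (-1) ^^ p) vac) (- m - 1) w =
              series_coeff (\<lambda>j::int. - (int p * (j + 1))) (\<lambda>j. (YW a j ^^ p) w) m)"
proof -
  interpret L: L5 smul vac Y smulW YW p a
    using assms unfolding L5_def L5_axioms_def by blast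
  show ?thesis using L.main1 L.main2 by blast
qed


end
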